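(* For all integers $b\ge2$ and $k\ge0$, $$\alpha_k(\mathbb{Z},b)=\sum_{i=1}^\infty\left\lfloor\frac{k}{b^i}\right\rfloor,$$ and for $k=0,1,2,\dots$, $$k!_{\mathbb{Z},\mathbb{N}}=\prod_{b=2}^k b^{\alpha_k(\mathbb{Z},b)}.$$
   Context: $\mathbb{N}=\{0,1,2,\dots\}$. For an integer $b\ge0$ and $a\in\mathbb{Z}$ define $\operatorname{ord}_b(a):=\sup\{k\in\mathbb{N}: a\mathbb{Z}\subseteq b^k\mathbb{Z}\}$ (convention $0^0=1$); thus for $b\ge2$ it is the largest $k$ with $b^k\mid a$ ($+\infty$ for $a=0$), $\operatorname{ord}_0(a)=+\infty$ if $a=0$ and $0$ otherwise, and $\operatorname{ord}_1(a)=+\infty$. For nonempty $S\subseteq\mathbb{Z}$, a $b$-ordering of $S$ is a sequence $(a_i)_{i\ge0}$ in $S$ such that for each $i\ge1$, $a_i$ attains $\min_{a'\in S}\sum_{j=0}^{i-1}\operatorname{ord}_b(a'-a_j)$; the $b$-exponent sequence is $\alpha_k(S,b):=\sum_{j=0}^{k-1}\operatorname{ord}_b(a_k-a_j)$ for any $b$-ordering (independent of the choice). For $\mathcal{T}\subseteq\mathbb{N}$ the generalized factorial is $k!_{S,\mathcal{T}}:=\prod_{b\in\mathcal{T}}b^{\alpha_k(S,b)}$, with conventions $b^{+\infty}=0$ for $b=0$ and $b\ge2$, $1^{+\infty}=1$, and $b^0=1$ for all $b\in\mathbb{N}$. *)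

theory Defs
  imports "HOL-Analysis.Analysis" "HOL-Library.Extended_Nat"
begin

text \<open>ord_b(a) = sup { k. a Z \<subseteq> b^k Z }; note a Z \<subseteq> b^k Z iff b^k divides a.\<close>
definition ordb :: "nat \<Rightarrow> int \<Rightarrow> enat" where
  "ordb b a = Sup (enat ` {k::nat. \<forall>x::int. \<exists>y::int. a * x = (int b) ^ k * y})"

definition b_ordering :: "int set \<Rightarrow> nat \<Rightarrow> (nat \<Rightarrow> int) \<Rightarrow> bool" where
  "b_ordering S b a \<longleftrightarrow> (\<forall>i. a i \<in> S) \<and>
     (\<forall>i\<ge>1. \<forall>a'\<in>S. (\<Sum>j<i. ordb b (a i - a j)) \<le> (\<Sum>j<i. ordb b (a' - a j)))"

definition alpha :: "int set \<Rightarrow> nat \<Rightarrow> nat \<Rightarrow> enat" where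
  "alpha S b k = (let a = (SOME a. b_ordering S b a) in (\<Sum>j<k. ordb b (a k - a j)))"

definition epow :: "nat \<Rightarrow> enat \<Rightarrow> nat" where
  "epow b e = (case e of enat n \<Rightarrow> b ^ n | \<infinity> \<Rightarrow> (if b = 1 then 1 else 0))"

text \<open>Generalized factorial: product over b in T of the (all but finitely many trivial) factors.\<close>
definition gfact :: "int set \<Rightarrow> nat set \<Rightarrow> nat \<Rightarrow> nat" where
  "gfact S T k = (\<Prod>b\<in>{b\<in>T. epow b (alpha S b k) \<noteq> 1}. epow b (alpha S b k))"

end

theory Submission
  imports Defs
begin


lemma ordb_set: "{k::nat. \<forall>x::int. \<exists>y::int. d * x = (int b) ^ k * y} = {k. (int b)^k dvd d}"
proof (intro set_eqI iffI; simp)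
  fix k assume "\<forall>x. \<exists>y. d * x = int b ^ k * y"
  then obtain y where "d * 1 = int b ^ k * y" by blast
  then show "int b ^ k dvd d" by simp
next
  fix k assume "int b ^ k dvd d"
  then obtain c where "d = int b ^ k * c" by blast
  then show "\<forall>x. \<exists>y. d * x = int b ^ k * y" by (metis mult.assoc)
qed

lemma ordb_alt: "ordb b d = Sup (enat ` {k. (int b)^k dvd d})"
  unfolding ordb_def ordb_set ..

lemma ordb_zero: "ordb b 0 = \<infinity>"
proof -
  have "\<not> finite (enat ` UNIV)"
    using finite_imageD[of enat UNIV] by (auto simp: inj_on_def)
  then show ?thesis unfolding ordb_alt by (simp add: Sup_enat_def)
qed

lemma ordb_char:
  assumes b: "b \<ge> 2" and d: "d \<noteq> 0"
  shows "\<exists>v. ordb b d = enat v \<and> (\<forall>m. (int b)^m dvd d \<longleftrightarrow> m \<le> v)"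
proof -
  define K where "K = {k. (int b)^k dvd d}"
  have "K \<subseteq> {..<nat \<bar>d\<bar>}"
  proof
    fix k assume "k \<in> K"
    then have "\<bar>(int b)^k\<bar> \<le> \<bar>d\<bar>" using d unfolding K_def
      by (intro dvd_imp_le_int) auto
    then have "(int b)^k \<le> \<bar>d\<bar>" by simp
    moreover have "int k < 2^k" by (metis of_nat_less_two_power)
    moreover have "(2::int)^k \<le> (int b)^k" using b by (intro power_mono) auto
    ultimately have "int k < \<bar>d\<bar>" by linarith
    then show "k \<in> {..<nat \<bar>d\<bar>}" by simp
  qed
  then have fin: "finite K" using finite_subset by blast
  have K0: "0 \<in> K" unfolding K_def by simp
  define v where "v = Max K"
  have vK: "v \<in> K" unfolding v_def using fin K0 Max_in by blast
  have kv: "k \<le> v" if "k \<in> K" for k unfolding v_def using fin that by simp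
  have "Sup (enat ` K) = enat v"
    by (rule antisym) (auto intro!: Sup_least Sup_upper simp: kv vK)
  moreover have "(int b)^m dvd d \<longleftrightarrow> m \<le> v" for m
  proof
    assume "(int b)^m dvd d" then show "m \<le> v" using kv K_def by auto
  next
    assume "m \<le> v"
    then have "(int b)^m dvd (int b)^v" by (rule le_imp_power_dvd)
    then show "(int b)^m dvd d" using vK K_def dvd_trans by auto
  qed
  ultimately show ?thesis unfolding ordb_alt K_def by auto
qed

lemma ordb_0: assumes "d \<noteq> 0" shows "ordb 0 d = 0"
proof -
  have "{k. (int 0)^k dvd d} = {0}" using assms by (auto simp: zero_power)
  then show ?thesis unfolding ordb_alt by (simp add: Sup_enat_def zero_enat_def)
qed



definition cnt :: "nat \<Rightarrow> (nat \<Rightarrow> int) \<Rightarrow> nat \<Rightarrow> int \<Rightarrow> nat" where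
  "cnt k a n x = (\<Sum>j<k. if int n dvd (x - a j) then 1 else 0)"

lemma cnt_Suc: "cnt (Suc k) a n x = cnt k a n x + (if int n dvd (x - a k) then 1 else 0)"
  by (simp add: cnt_def)

lemma cnt_0: "cnt 0 a n x = 0" by (simp add: cnt_def)

lemma cnt_1: "cnt k a 1 x = k" by (simp add: cnt_def)

lemma cnt_cong: assumes "int n dvd (x - y)" shows "cnt k a n x = cnt k a n y"
  unfolding cnt_def
proof (intro sum.cong refl)
  fix j
  have "x - a j = (x - y) + (y - a j)" by simp
  then have "int n dvd (x - a j) \<longleftrightarrow> int n dvd (y - a j)"
    using assms by (metis dvd_add_right_iff)
  then show "(if int n dvd (x - a j) then 1 else 0) = (if int n dvd (y - a j) then 1 else (0::nat))"
    by simp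
qed

lemma ind_sub:
  assumes n: "n \<ge> 1" and m: "m \<ge> 1"
  shows "(\<Sum>t\<in>{0..<int m}. if int (n*m) dvd (x + t * int n - z) then 1 else 0)
         = (if int n dvd (x - z) then (1::nat) else 0)"
proof (cases "int n dvd (x - z)")
  case True
  then obtain c where c: "x - z = int n * c" by blast
  define t0 where "t0 = (- c) mod int m"
  have "int (n*m) dvd (x + t * int n - z) \<longleftrightarrow> t = t0" if t: "t \<in> {0..<int m}" for t
  proof -
    have "x + t * int n - z = int n * (c + t)" using c by (simp add: algebra_simps)
    then have "int (n*m) dvd (x + t * int n - z) \<longleftrightarrow> int m dvd (c + t)"
      using n by (simp add: dvd_times_left_cancel_iff)
    also have "\<dots> \<longleftrightarrow> t mod int m = (- c) mod int m"
      by (simp add: mod_eq_dvd_iff add.commute)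
    also have "t mod int m = t" using t by simp
    finally show ?thesis unfolding t0_def .
  qed
  then have "(\<Sum>t\<in>{0..<int m}. if int (n*m) dvd (x + t * int n - z) then 1 else 0)
        = (\<Sum>t\<in>{0..<int m}. if t = t0 then 1 else (0::nat))"
    by (intro sum.cong) auto
  also have "\<dots> = 1" using m by (simp add: t0_def)
  finally show ?thesis using True by simp
next
  case False
  have "\<not> int (n*m) dvd (x + t * int n - z)" for t
  proof
    assume "int (n*m) dvd (x + t * int n - z)"
    then have "int n dvd (x + t * int n - z)" by (metis dvd_mult_left of_nat_mult)
    then have "int n dvd (x - z + t * int n)" by (simp add: algebra_simps)
    then show False using False by (metis dvd_add_left_iff dvd_triv_right)
  qed
  then show ?thesis using False by simp
qed

lemma cnt_sub:
  assumes n: "n \<ge> 1" and m: "m \<ge> 1"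
  shows "cnt k a n x = (\<Sum>t\<in>{0..<int m}. cnt k a (n*m) (x + t * int n))"
proof (induction k)
  case 0 then show ?case by (simp add: cnt_0)
next
  case (Suc k)
  have "(\<Sum>t\<in>{0..<int m}. cnt (Suc k) a (n*m) (x + t * int n))
      = (\<Sum>t\<in>{0..<int m}. cnt k a (n*m) (x + t * int n))
        + (\<Sum>t\<in>{0..<int m}. if int (n*m) dvd (x + t * int n - a k) then 1 else 0)"
    by (simp only: cnt_Suc sum.distrib)
  also have "\<dots> = cnt k a n x + (if int n dvd (x - a k) then 1 else 0)"
    using Suc ind_sub[OF n m] by simp
  finally show ?case by (simp add: cnt_Suc)
qed

definition bal :: "nat \<Rightarrow> (nat \<Rightarrow> int) \<Rightarrow> nat \<Rightarrow> bool" where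
  "bal k a n \<longleftrightarrow> (\<forall>x y. cnt k a n x \<le> cnt k a n y + 1)"

lemma bal_lb:
  assumes n: "n \<ge> 1" and B: "bal k a n"
  shows "k div n \<le> cnt k a n x"
proof (rule ccontr)
  assume "\<not> k div n \<le> cnt k a n x"
  then have lt: "cnt k a n x < k div n" by simp
  have "k = cnt k a 1 0" by (rule cnt_1[symmetric])
  also have "\<dots> = (\<Sum>t\<in>{0..<int n}. cnt k a n t)"
    using cnt_sub[of 1 n k a 0] n by simp
  also have "\<dots> < (\<Sum>t\<in>{0..<int n}. k div n)"
  proof (rule sum_strict_mono_ex1)
    show "finite {0..<int n}" by simp
    show "\<forall>t\<in>{0..<int n}. cnt k a n t \<le> k div n"
      using B lt unfolding bal_def by (metis Suc_leI add.commute le_trans plus_1_eq_Suc)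
    have "int n dvd (x - x mod int n)" by (simp add: mod_eq_dvd_iff[symmetric])
    then have "cnt k a n (x mod int n) = cnt k a n x" using cnt_cong by metis
    moreover have "x mod int n \<in> {0..<int n}" using n by simp
    ultimately show "\<exists>t\<in>{0..<int n}. cnt k a n t < k div n" using lt by metis
  qed
  also have "\<dots> = n * (k div n)" by simp
  also have "\<dots> \<le> k" by simp
  finally show False by simp
qed

lemma bal_step:
  assumes B: "bal k a n" and m: "\<forall>y. cnt k a n (a k) \<le> cnt k a n y"
  shows "bal (Suc k) a n"
  unfolding bal_def
proof (intro allI)
  fix x y
  have cx: "int n dvd (x - a k) \<Longrightarrow> cnt k a n x = cnt k a n (a k)" using cnt_cong by blast
  have cy: "int n dvd (y - a k) \<Longrightarrow> cnt k a n y = cnt k a n (a k)" using cnt_cong by blast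
  show "cnt (Suc k) a n x \<le> cnt (Suc k) a n y + 1"
  proof -
    have 1: "cnt k a n x \<le> cnt k a n y + 1" using B unfolding bal_def by blast
    have 2: "cnt k a n (a k) \<le> cnt k a n y" using m by blast
    have 3: "cnt k a n x \<le> cnt k a n (a k) + 1" using B unfolding bal_def by blast
    show ?thesis unfolding cnt_Suc
      using 1 2 3 cx cy by (cases "int n dvd (x - a k)"; cases "int n dvd (y - a k)") auto
  qed
qed



definition val :: "nat \<Rightarrow> nat \<Rightarrow> (nat \<Rightarrow> int) \<Rightarrow> int \<Rightarrow> enat" where
  "val b k a x = (\<Sum>j<k. ordb b (x - a j))"

lemma sum_min: "(\<Sum>i<M. if Suc i \<le> v then 1 else 0) = min M (v::nat)"
  by (induction M) auto

lemma ordb_ge: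
  assumes b: "b \<ge> 2"
  shows "enat (\<Sum>i<M. if int b ^ Suc i dvd d then 1 else 0) \<le> ordb b d"
proof (cases "d = 0")
  case True then show ?thesis by (simp add: ordb_zero)
next
  case False
  then obtain v where v: "ordb b d = enat v" "\<And>m. (int b)^m dvd d \<longleftrightarrow> m \<le> v"
    using ordb_char[OF b] by blast
  have "(\<Sum>i<M. if int b ^ Suc i dvd d then 1 else 0) = (\<Sum>i<M. if Suc i \<le> v then 1 else (0::nat))"
    by (intro sum.cong refl) (simp only: v(2))
  also have "\<dots> = min M v" by (rule sum_min)
  finally show ?thesis using v(1) by simp
qed

lemma ordb_eq:
  assumes b: "b \<ge> 2" and nd: "\<not> int b ^ Suc M dvd d"
  shows "ordb b d = enat (\<Sum>i<M. if int b ^ Suc i dvd d then 1 else 0)"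
proof -
  have "d \<noteq> 0" using nd by auto
  then obtain v where v: "ordb b d = enat v" "\<And>m. (int b)^m dvd d \<longleftrightarrow> m \<le> v"
    using ordb_char[OF b] by blast
  have "v \<le> M" using nd v(2)[of "Suc M"] by simp
  have "(\<Sum>i<M. if int b ^ Suc i dvd d then 1 else 0) = (\<Sum>i<M. if Suc i \<le> v then 1 else (0::nat))"
    by (intro sum.cong refl) (simp only: v(2))
  also have "\<dots> = min M v" by (rule sum_min)
  finally show ?thesis using v(1) \<open>v \<le> M\<close> by simp
qed

lemma enat_sum: "enat (sum f A) = (\<Sum>x\<in>A. enat (f x))"
  by (metis (mono_tags, lifting) of_nat_eq_enat of_nat_sum sum.cong)

lemma swap_cnt: "(\<Sum>i<M. cnt k a (b^Suc i) x) = (\<Sum>j<k. (\<Sum>i<M. if int b ^ Suc i dvd (x - a j) then 1 else 0))"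
  unfolding cnt_def of_nat_power by (rule sum.swap)

lemma val_ge:
  assumes b: "b \<ge> 2"
  shows "enat (\<Sum>i<M. cnt k a (b^Suc i) x) \<le> val b k a x"
proof -
  have "enat (\<Sum>i<M. cnt k a (b^Suc i) x) = (\<Sum>j<k. enat (\<Sum>i<M. if int b ^ Suc i dvd (x - a j) then 1 else 0))"
    unfolding swap_cnt by (rule enat_sum)
  also have "\<dots> \<le> val b k a x" unfolding val_def
    by (intro sum_mono ordb_ge[OF b])
  finally show ?thesis .
qed

lemma val_eq:
  assumes b: "b \<ge> 2" and z: "cnt k a (b^Suc M) x = 0"
  shows "val b k a x = enat (\<Sum>i<M. cnt k a (b^Suc i) x)"
proof -
  have nd: "\<forall>j<k. \<not> int b ^ Suc M dvd (x - a j)" using z unfolding cnt_def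
    by (force simp: sum_eq_0_iff)
  have "enat (\<Sum>i<M. cnt k a (b^Suc i) x) = (\<Sum>j<k. enat (\<Sum>i<M. if int b ^ Suc i dvd (x - a j) then 1 else 0))"
    unfolding swap_cnt by (rule enat_sum)
  also have "\<dots> = val b k a x" unfolding val_def
    by (intro sum.cong refl) (use nd ordb_eq[OF b] in auto)
  finally show ?thesis by simp
qed

definition L :: "nat \<Rightarrow> nat \<Rightarrow> nat" where
  "L b k = (\<Sum>i<k. k div b^Suc i)"

lemma pow_gt: assumes "b \<ge> 2" shows "i < b^i"
proof -
  have "i < 2^i" by (rule less_exp)
  also have "(2::nat)^i \<le> b^i" using assms by (intro power_mono) auto
  finally show ?thesis .
qed

lemma div_big: assumes "b \<ge> 2" "k \<le> i" shows "k div b^Suc i = 0"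
proof -
  have "k < b^Suc i" using pow_gt[OF assms(1), of "Suc i"] assms(2) by simp
  then show ?thesis by simp
qed

lemma L_ext: assumes b: "b \<ge> 2" and kM: "k \<le> M" shows "(\<Sum>i<M. k div b^Suc i) = L b k"
proof -
  have "(\<Sum>i<k. k div b^Suc i) = (\<Sum>i<M. k div b^Suc i)"
    by (rule sum.mono_neutral_left) (use kM div_big[OF b] in auto)
  then show ?thesis unfolding L_def by simp
qed

context
  fixes b k :: nat and a :: "nat \<Rightarrow> int"
  assumes b: "b \<ge> 2" and LB: "\<And>e x. k div b^e \<le> cnt k a (b^e) x"
begin

lemma val_lb: "enat (L b k) \<le> val b k a x"
proof -
  have "L b k \<le> (\<Sum>i<k. cnt k a (b^Suc i) x)" unfolding L_def by (intro sum_mono LB)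
  then show ?thesis using val_ge[OF b, where M=k and k=k and a=a and x=x] by (meson enat_ord_simps(1) order_trans)
qed

lemma val_min_cnt:
  assumes v: "val b k a x \<le> enat (L b k)"
  shows "cnt k a (b^e) x = k div b^e"
proof (cases e)
  case 0 then show ?thesis using cnt_1[of k a x] by simp
next
  case (Suc e0)
  show ?thesis
  proof (rule ccontr)
    assume ne: "cnt k a (b^e) x \<noteq> k div b^e"
    define M where "M = max k (Suc e0)"
    have "L b k = (\<Sum>i<M. k div b^Suc i)" using L_ext[OF b, of k M] by (simp add: M_def)
    also have "\<dots> < (\<Sum>i<M. cnt k a (b^Suc i) x)"
    proof (rule sum_strict_mono_ex1)
      show "finite {..<M}" by simp
      show "\<forall>i\<in>{..<M}. k div b ^ Suc i \<le> cnt k a (b ^ Suc i) x" using LB by blast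
      have "k div b ^ Suc e0 < cnt k a (b ^ Suc e0) x" using LB[of e x] ne Suc by simp
      then show "\<exists>i\<in>{..<M}. k div b ^ Suc i < cnt k a (b ^ Suc i) x"
        by (intro bexI[of _ e0]) (auto simp: M_def)
    qed
    finally have "enat (L b k) < val b k a x"
      using val_ge[OF b, where M=M and k=k and a=a and x=x] by (meson enat_ord_simps(2) less_le_trans)
    then show False using v by simp
  qed
qed

lemma refine:
  "\<exists>x. \<forall>e'\<le>e. cnt k a (b^e') x = k div b^e'"
proof (induction e)
  case 0 then show ?case using cnt_1[of k a 0] by auto
next
  case (Suc e)
  then obtain x where x: "\<forall>e'\<le>e. cnt k a (b^e') x = k div b^e'" by blast
  define q where "q = k div b^Suc e"
  have bpos: "b^e \<ge> 1" using b by simp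
  have sub: "cnt k a (b^e) x = (\<Sum>t\<in>{0..<int b}. cnt k a (b^e*b) (x + t * int (b^e)))"
    using cnt_sub[OF bpos, of b k a x] b by simp
  have "\<exists>t\<in>{0..<int b}. cnt k a (b^e*b) (x + t * int (b^e)) \<le> q"
  proof (rule ccontr)
    assume "\<not> ?thesis"
    then have "\<forall>t\<in>{0..<int b}. q + 1 \<le> cnt k a (b^e*b) (x + t * int (b^e))" by auto
    then have "(\<Sum>t\<in>{0..<int b}. q + 1) \<le> cnt k a (b^e) x"
      unfolding sub by (intro sum_mono) auto
    then have "b * (q + 1) \<le> k div b^e" using x by simp
    moreover have "k div b^e div b = q" unfolding q_def power_Suc2 div_mult2_eq ..
    moreover have "k div b^e < b * (k div b^e div b + 1)"
    proof -
      have e1: "k div b^e = b * (k div b^e div b) + k div b^e mod b" by simp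
      have e2: "k div b^e mod b < b" using b by simp
      have e3: "b * (k div b^e div b + 1) = b * (k div b^e div b) + b" by (simp add: algebra_simps)
      show ?thesis using e1 e2 e3 by linarith
    qed
    ultimately show False by simp
  qed
  then obtain t where t: "t \<in> {0..<int b}" "cnt k a (b^e*b) (x + t * int (b^e)) \<le> q" by blast
  define x' where "x' = x + t * int (b^e)"
  have "cnt k a (b^e') x' = k div b^e'" if "e' \<le> Suc e" for e'
  proof (cases "e' = Suc e")
    case True
    have pe: "b^Suc e = b^e*b" by (simp add: power_Suc2)
    have h1: "cnt k a (b^e*b) x' \<le> q" using t(2) unfolding x'_def .
    have h2: "q \<le> cnt k a (b^e*b) x'" using LB[of "Suc e" x'] unfolding q_def pe .
    show ?thesis using h1 h2 unfolding True pe q_def by simp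
  next
    case False
    then have "e' \<le> e" using that by simp
    then have "int (b^e') dvd int (b^e)" by (simp add: le_imp_power_dvd)
    then have "int (b^e') dvd (x' - x)" unfolding x'_def by simp
    then have "cnt k a (b^e') x' = cnt k a (b^e') x" by (rule cnt_cong)
    then show ?thesis using x \<open>e' \<le> e\<close> by simp
  qed
  then show ?case by blast
qed

lemma val_exists: "\<exists>x. val b k a x = enat (L b k)"
proof -
  obtain x where x: "\<forall>e'\<le>Suc k. cnt k a (b^e') x = k div b^e'" using refine by blast
  have "cnt k a (b^Suc k) x = k div b^Suc k" using x by blast
  then have "cnt k a (b^Suc k) x = 0" using div_big[OF b, of k k] by simp
  then have "val b k a x = enat (\<Sum>i<k. cnt k a (b^Suc i) x)" by (rule val_eq[OF b])
  also have "(\<Sum>i<k. cnt k a (b^Suc i) x) = L b k" unfolding L_def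
  proof (intro sum.cong refl)
    fix i assume "i \<in> {..<k}"
    then have "Suc i \<le> Suc k" by simp
    then show "cnt k a (b^Suc i) x = k div b^Suc i" using x by blast
  qed
  finally show ?thesis by blast
qed

end



fun gl :: "nat \<Rightarrow> nat \<Rightarrow> int list" where
  "gl b 0 = [0]"
| "gl b (Suc n) = gl b n @ [SOME x. \<forall>x'. (\<Sum>j<Suc n. ordb b (x - gl b n ! j)) \<le> (\<Sum>j<Suc n. ordb b (x' - gl b n ! j))]"

lemma gl_len: "length (gl b n) = Suc n"
  by (induction n) auto

lemma gl_prefix: assumes "j \<le> n" "n \<le> m" shows "gl b m ! j = gl b n ! j"
  using assms(2)
proof (induction m rule: dec_induct)
  case base then show ?case by simp
next
  case (step m)
  have "j < length (gl b m)" using assms(1) step(1) gl_len[of b m] by simp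
  then show ?case using step(3) by (simp add: nth_append)
qed

definition gs :: "nat \<Rightarrow> nat \<Rightarrow> int" where "gs b i = gl b i ! i"

lemma min_exists: "\<exists>x::int. \<forall>x'. F x \<le> (F x' :: enat)"
proof -
  define v where "v = (LEAST v. v \<in> range F)"
  have "v \<in> range F" unfolding v_def by (rule LeastI_ex) blast
  then obtain x where "F x = v" by blast
  moreover have "v \<le> F x'" for x' unfolding v_def by (rule Least_le) blast
  ultimately show ?thesis by metis
qed

lemma gs_ordering: "b_ordering UNIV b (gs b)"
  unfolding b_ordering_def
proof (intro conjI allI impI ballI)
  fix i :: nat and a' :: int assume "1 \<le> i"
  then obtain n where i: "i = Suc n" by (cases i) auto
  have eq: "gl b n ! j = gs b j" if "j < Suc n" for j
    unfolding gs_def using that gl_prefix[of j j n b] by simp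
  have sm: "(\<Sum>j<Suc n. ordb b (y - gl b n ! j)) = (\<Sum>j<Suc n. ordb b (y - gs b j))" for y
    by (intro sum.cong refl) (simp add: eq)
  have "gs b (Suc n) = (SOME x. \<forall>x'. (\<Sum>j<Suc n. ordb b (x - gl b n ! j)) \<le> (\<Sum>j<Suc n. ordb b (x' - gl b n ! j)))"
    unfolding gs_def using gl_len[of b n] by (simp add: nth_append)
  also have "\<dots> = (SOME x. \<forall>x'. (\<Sum>j<Suc n. ordb b (x - gs b j)) \<le> (\<Sum>j<Suc n. ordb b (x' - gs b j)))"
    unfolding sm ..
  finally have g: "gs b (Suc n) = (SOME x. \<forall>x'. (\<Sum>j<Suc n. ordb b (x - gs b j)) \<le> (\<Sum>j<Suc n. ordb b (x' - gs b j)))" .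
  have "\<forall>x'. (\<Sum>j<Suc n. ordb b (gs b (Suc n) - gs b j)) \<le> (\<Sum>j<Suc n. ordb b (x' - gs b j))"
    unfolding g by (rule someI_ex) (rule min_exists)
  then show "(\<Sum>j<i. ordb b (gs b i - gs b j)) \<le> (\<Sum>j<i. ordb b (a' - gs b j))" unfolding i by blast
qed auto

lemma ex_ordering: "\<exists>a. b_ordering UNIV b a" using gs_ordering by blast

lemma ord_val: "b_ordering UNIV b a \<Longrightarrow> 1 \<le> i \<Longrightarrow> val b i a (a i) \<le> val b i a x"
  unfolding b_ordering_def val_def by blast

lemma main_bal:
  assumes b: "b \<ge> 2" and ord: "b_ordering UNIV b a"
  shows "\<forall>e. bal k a (b^e)"
proof (induction k)
  case 0 then show ?case by (simp add: bal_def cnt_0)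
next
  case (Suc k)
  have LB: "\<And>e x. k div b^e \<le> cnt k a (b^e) x"
    using Suc bal_lb b by simp
  obtain x0 where x0: "val b k a x0 = enat (L b k)" using val_exists[OF b LB] by blast
  have "val b k a (a k) \<le> enat (L b k)"
  proof (cases "k = 0")
    case True then show ?thesis by (simp add: val_def)
  next
    case False then show ?thesis using ord_val[OF ord, of k x0] x0 by simp
  qed
  then have "cnt k a (b^e) (a k) = k div b^e" for e by (rule val_min_cnt[OF b LB])
  then have "\<forall>y. cnt k a (b^e) (a k) \<le> cnt k a (b^e) y" for e using LB by simp
  then show ?case using Suc bal_step by blast
qed

lemma main_val:
  assumes b: "b \<ge> 2" and ord: "b_ordering UNIV b a"
  shows "val b k a (a k) = enat (L b k)"
proof -
  have LB: "\<And>e x. k div b^e \<le> cnt k a (b^e) x"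
    using main_bal[OF b ord, of k] bal_lb b by simp
  obtain x0 where x0: "val b k a x0 = enat (L b k)" using val_exists[OF b LB] by blast
  have "val b k a (a k) \<le> enat (L b k)"
  proof (cases "k = 0")
    case True then show ?thesis by (simp add: val_def)
  next
    case False then show ?thesis using ord_val[OF ord, of k x0] x0 by simp
  qed
  then show ?thesis using val_lb[OF b LB, of "a k"] by simp
qed

lemma alpha_val: "alpha UNIV b k = val b k (SOME a. b_ordering UNIV b a) ((SOME a. b_ordering UNIV b a) k)"
  unfolding alpha_def val_def Let_def ..

lemma alpha_ge2: assumes b: "b \<ge> 2" shows "alpha UNIV b k = enat (L b k)"
  unfolding alpha_val using main_val[OF b someI_ex[OF ex_ordering]] .

lemma alpha_0: "alpha UNIV 0 k = 0"
proof -
  define a where "a = (SOME a. b_ordering UNIV 0 a)"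
  have ord: "b_ordering UNIV 0 a" unfolding a_def using someI_ex[OF ex_ordering] .
  show ?thesis
  proof (cases "k = 0")
    case True then show ?thesis unfolding alpha_val by (simp add: val_def)
  next
    case False
    obtain x' :: int where x': "x' \<notin> a ` {..<k}"
      using ex_new_if_finite[OF infinite_UNIV_int, of "a ` {..<k}"] by blast
    have "val 0 k a x' = 0" unfolding val_def
      using x' by (intro sum.neutral) (auto intro!: ordb_0)
    then have "val 0 k a (a k) \<le> 0" using ord_val[OF ord, of k x'] False by simp
    then show ?thesis unfolding alpha_val a_def[symmetric] by simp
  qed
qed

lemma epow_1: "epow 1 e = 1" by (cases e) (auto simp: epow_def)

theorem theorem7p2:
  shows "(\<forall>b k::nat. b \<ge> 2 \<longrightarrow>
            (\<exists>n::nat. alpha (UNIV::int set) b k = enat n \<and>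
               (\<lambda>i. real_of_int \<lfloor>real k / real b ^ (Suc i)\<rfloor>) sums (real n)))
       \<and> (\<forall>k::nat. gfact (UNIV::int set) (UNIV::nat set) k
                   = (\<Prod>b\<in>{2..k}. epow b (alpha (UNIV::int set) b k)))"
proof (intro conjI allI impI)
  fix b k :: nat assume b: "b \<ge> 2"
  have f: "(\<lambda>i. real_of_int \<lfloor>real k / real b ^ (Suc i)\<rfloor>) = (\<lambda>i. real (k div b ^ Suc i))"
  proof
    fix i
    have "real k / real b ^ Suc i = of_nat k / of_nat (b ^ Suc i)" by simp
    then show "real_of_int \<lfloor>real k / real b ^ (Suc i)\<rfloor> = real (k div b ^ Suc i)"
      by (simp only: floor_divide_of_nat_eq)
  qed
  have "(\<lambda>i. real (k div b ^ Suc i)) sums (\<Sum>i\<in>{..<k}. real (k div b ^ Suc i))"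
  proof (rule sums_finite)
    fix i assume "i \<notin> {..<k}"
    then have "k \<le> i" by simp
    then show "real (k div b ^ Suc i) = 0" using div_big[OF b] by simp
  qed simp
  then have "(\<lambda>i. real_of_int \<lfloor>real k / real b ^ (Suc i)\<rfloor>) sums real (L b k)"
    unfolding f L_def by simp
  then show "\<exists>n::nat. alpha (UNIV::int set) b k = enat n \<and>
               (\<lambda>i. real_of_int \<lfloor>real k / real b ^ (Suc i)\<rfloor>) sums (real n)"
    using alpha_ge2[OF b] by blast
next
  fix k :: nat
  let ?g = "\<lambda>b. epow b (alpha UNIV b k)"
  have one: "?g b = 1" if nb: "b \<notin> {2..k}" for b
  proof -
    consider "b = 0" | "b = 1" | "b \<ge> 2" "b > k" using nb by force
    then show ?thesis
    proof cases
      case 1 then show ?thesis by (simp add: alpha_0 epow_def zero_enat_def)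
    next
      case 2 then show ?thesis using epow_1 by simp
    next
      case 3
      have "L b k = 0" unfolding L_def
      proof (intro sum.neutral ballI)
        fix i assume "i \<in> {..<k}"
        have "b \<le> b ^ Suc i" using 3 by (simp add: self_le_power)
        then have "k < b ^ Suc i" using 3 by linarith
        then show "k div b ^ Suc i = 0" by (rule div_less)
      qed
      then show ?thesis using alpha_ge2[OF 3(1)] by (simp add: epow_def)
    qed
  qed
  have "(\<Prod>b\<in>{2..k}. ?g b) = (\<Prod>b\<in>{b\<in>UNIV. ?g b \<noteq> 1}. ?g b)"
  proof (rule prod.mono_neutral_right)
    show "{b\<in>UNIV. ?g b \<noteq> 1} \<subseteq> {2..k}" using one by blast
  qed auto
  then show "gfact UNIV UNIV k = (\<Prod>b\<in>{2..k}. ?g b)" unfolding gfact_def by simp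
qed

end
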